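(* For every $n\ge2$, the total number of edges, summed over all plane trees $T$ on $n$ vertices and all leaves $\ell$ of $T$, of the path from the root to $\ell$ equals $4^{n-2}$. The total number of leaves over all plane trees on $n$ vertices is $\frac12\binom{2n-2}{n-1}$. Consequently, the expected length of the root-to-leaf path, for a uniformly random pair (plane tree on $n$ vertices, leaf of it), is $$\frac{(2n-2)!!}{2\,(2n-3)!!}=\frac{\sqrt{\pi n}}{2}+O\Bigl(\frac1{\sqrt n}\Bigr).$$
   Context: General (plane) trees are rooted trees in which every vertex may have any number of children and the children of each vertex are linearly ordered. The size of a tree is its number of vertices, and a leaf is a vertex with no children. The double factorials are $(2m)!!=2\cdot4\cdots(2m)$ and $(2m-1)!!=1\cdot3\cdots(2m-1)$, with $0!!=1$. *)

theory Defs
  imports Complex_Main "HOL-Library.Landau_Symbols"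
begin

datatype ptree = Node "ptree list"

fun tsize :: "ptree \<Rightarrow> nat" where
  "tsize (Node ts) = Suc (sum_list (map tsize ts))"

text \<open>Leaves, identified by their address: the list of child indices along the
path from the root. The number of edges of the root-to-leaf path is the
length of the address.\<close>
function leaves :: "ptree \<Rightarrow> nat list set" where
  "leaves (Node ts) =
     (if ts = [] then {[]}
      else (\<Union>i<length ts. (Cons i) ` leaves (ts ! i)))"
  by pat_completeness auto
termination
  by (relation "measure size") (auto simp: less_Suc_eq_le intro!: size_list_estimation'[OF nth_mem])

definition trees :: "nat \<Rightarrow> ptree set" where
  "trees n = {t. tsize t = n}"

fun dfact :: "nat \<Rightarrow> nat" where
  "dfact 0 = 1"
| "dfact (Suc 0) = 1"
| "dfact (Suc (Suc m)) = Suc (Suc m) * dfact m"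

definition total_leaf_depth :: "nat \<Rightarrow> nat" where
  "total_leaf_depth n = (\<Sum>t\<in>trees n. \<Sum>p\<in>leaves t. length p)"

definition total_leaves :: "nat \<Rightarrow> nat" where
  "total_leaves n = (\<Sum>t\<in>trees n. card (leaves t))"

definition expected_leaf_depth :: "nat \<Rightarrow> real" where
  "expected_leaf_depth n = real (total_leaf_depth n) / real (total_leaves n)"

end

theory Submission
  imports Defs "HOL-Computational_Algebra.Formal_Power_Series" "HOL-Analysis.Gamma_Function"
begin

fun nl :: "ptree \<Rightarrow> nat" where
  "nl (Node ts) = (if ts = [] then 1 else sum_list (map nl ts))"

fun dp :: "ptree \<Rightarrow> nat" where
  "dp (Node ts) = sum_list (map (\<lambda>t. dp t + nl t) ts)"

lemma sum_list_nth_eq: "sum_list (map f ts) = (\<Sum>i<length ts. f (ts ! i))"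
  by (simp add: sum_list_sum_nth atLeast0LessThan)

lemma leaves_props:
  "finite (leaves t) \<and> card (leaves t) = nl t \<and> (\<Sum>p\<in>leaves t. length p) = dp t"
proof (induction t)
  case (Node ts)
  show ?case
  proof (cases "ts = []")
    case True thus ?thesis by simp
  next
    case False
    have IH: "\<And>i. i < length ts \<Longrightarrow> finite (leaves (ts!i)) \<and> card (leaves (ts!i)) = nl (ts!i)
       \<and> (\<Sum>p\<in>leaves (ts!i). length p) = dp (ts!i)"
      using Node nth_mem by blast
    have eq: "leaves (Node ts) = (\<Union>i<length ts. (Cons i) ` leaves (ts ! i))"
      using False by simp
    have disj: "\<forall>i\<in>{..<length ts}. \<forall>j\<in>{..<length ts}. i \<noteq> j \<longrightarrow>
        (Cons i) ` leaves (ts ! i) \<inter> (Cons j) ` leaves (ts ! j) = {}" by auto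
    have fin: "\<forall>i\<in>{..<length ts}. finite ((Cons i) ` leaves (ts ! i))" using IH by auto
    have "card (leaves (Node ts)) = (\<Sum>i<length ts. card ((Cons i) ` leaves (ts ! i)))"
      unfolding eq by (rule card_UN_disjoint[OF _ fin disj]) simp
    also have "\<dots> = (\<Sum>i<length ts. nl (ts ! i))"
      by (rule sum.cong) (auto simp: card_image IH)
    finally have c: "card (leaves (Node ts)) = nl (Node ts)"
      using False by (simp add: sum_list_nth_eq)
    have "(\<Sum>p\<in>leaves (Node ts). length p) = (\<Sum>i<length ts. \<Sum>p\<in>(Cons i) ` leaves (ts ! i). length p)"
      unfolding eq by (rule sum.UNION_disjoint[OF _ fin disj]) simp
    also have "\<dots> = (\<Sum>i<length ts. \<Sum>p\<in>leaves (ts ! i). Suc (length p))"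
      by (rule sum.cong) (auto simp: sum.reindex)
    also have "\<dots> = (\<Sum>i<length ts. dp (ts ! i) + nl (ts ! i))"
      by (rule sum.cong) (auto simp: sum_Suc IH)
    finally have d: "(\<Sum>p\<in>leaves (Node ts). length p) = dp (Node ts)"
      by (simp add: sum_list_nth_eq)
    show ?thesis using c d fin eq by simp
  qed
qed

definition forests :: "nat \<Rightarrow> ptree list set" where
  "forests n = {ts. sum_list (map tsize ts) = n}"

lemma tsize_pos: "tsize t \<ge> 1"
  by (cases t) simp

lemma trees_0: "trees 0 = {}"
proof -
  have "tsize t \<noteq> 0" for t using tsize_pos[of t] by simp
  thus ?thesis by (auto simp: trees_def)
qed

lemma trees_Suc: "trees (Suc n) = Node ` forests n"
proof -
  have "t \<in> Node ` forests n" if "tsize t = Suc n" for t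
    using that by (cases t) (auto simp: forests_def)
  thus ?thesis by (auto simp: trees_def forests_def)
qed

lemma forests_eq: "forests n = (if n = 0 then {[]} else {}) \<union>
   (\<Union>i\<in>{0..n}. (\<lambda>(t,r). t # r) ` (trees i \<times> forests (n - i)))"
proof -
  have "ts \<in> (if n = 0 then {[]} else {}) \<union>
   (\<Union>i\<in>{0..n}. (\<lambda>(t,r). t # r) ` (trees i \<times> forests (n - i)))" if "ts \<in> forests n" for ts
  proof (cases ts)
    case Nil thus ?thesis using that by (simp add: forests_def)
  next
    case (Cons t r)
    hence "tsize t \<in> {0..n}" "t \<in> trees (tsize t)" "r \<in> forests (n - tsize t)"
      using that by (auto simp: forests_def trees_def)
    thus ?thesis using Cons by blast
  qed
  moreover have "(if n = 0 then {[]} else {}) \<union>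
   (\<Union>i\<in>{0..n}. (\<lambda>(t,r). t # r) ` (trees i \<times> forests (n - i))) \<subseteq> forests n"
    by (auto simp: forests_def trees_def split: if_splits)
  ultimately show ?thesis by blast
qed

lemma finite_forests: "finite (forests n)"
proof (induction n rule: less_induct)
  case (less n)
  have "finite (trees i \<times> forests (n - i))" if "i \<in> {0..n}" for i
  proof (cases i)
    case 0 thus ?thesis by (simp add: trees_0)
  next
    case (Suc j)
    hence "finite (trees i)" using less that by (simp add: trees_Suc)
    moreover have "finite (forests (n - i))" using less Suc that by simp
    ultimately show ?thesis by simp
  qed
  thus ?case by (subst forests_eq) auto
qed

lemma finite_trees: "finite (trees n)"
  by (cases n) (auto simp: trees_0 trees_Suc finite_forests)

definition tsum :: "(ptree \<Rightarrow> real) \<Rightarrow> nat \<Rightarrow> real" where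
  "tsum h n = (\<Sum>t\<in>trees n. h t)"
definition fsum :: "(ptree list \<Rightarrow> real) \<Rightarrow> nat \<Rightarrow> real" where
  "fsum g n = (\<Sum>ts\<in>forests n. g ts)"

lemma fsum_cons:
  "fsum (\<lambda>ts. case ts of [] \<Rightarrow> 0 | t # r \<Rightarrow> a t * b r) n = (\<Sum>i=0..n. tsum a i * fsum b (n - i))"
proof -
  let ?g = "\<lambda>ts. case ts of [] \<Rightarrow> 0 | t # r \<Rightarrow> a t * b r"
  let ?U = "\<Union>i\<in>{0..n}. (\<lambda>(t,r). t # r) ` (trees i \<times> forests (n - i))"
  have fin: "\<forall>i\<in>{0..n}. finite ((\<lambda>(t,r). t # r) ` (trees i \<times> forests (n - i)))"
    by (auto intro!: finite_imageI finite_cartesian_product finite_trees finite_forests)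
  have disj: "\<forall>i\<in>{0..n}. \<forall>j\<in>{0..n}. i \<noteq> j \<longrightarrow>
     (\<lambda>(t,r). t # r) ` (trees i \<times> forests (n - i)) \<inter> (\<lambda>(t,r). t # r) ` (trees j \<times> forests (n - j)) = {}"
    by (auto simp: trees_def)
  have "fsum ?g n = (\<Sum>ts\<in>(if n = 0 then {[]} else {}) \<union> ?U. ?g ts)"
    unfolding fsum_def by (subst forests_eq) simp
  also have "\<dots> = (\<Sum>ts\<in>?U. ?g ts)"
    by (rule sum.mono_neutral_right) (auto simp: finite_trees finite_forests)
  also have "\<dots> = (\<Sum>i=0..n. \<Sum>ts\<in>(\<lambda>(t,r). t # r) ` (trees i \<times> forests (n - i)). ?g ts)"
    by (rule sum.UNION_disjoint[OF _ fin disj]) simp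
  also have "\<dots> = (\<Sum>i=0..n. \<Sum>(t,r)\<in>trees i \<times> forests (n - i). a t * b r)"
    by (rule sum.cong) (auto simp: sum.reindex inj_on_def intro!: sum.cong)
  also have "\<dots> = (\<Sum>i=0..n. tsum a i * fsum b (n - i))"
    by (rule sum.cong) (auto simp: tsum_def fsum_def sum_product sum.cartesian_product)
  finally show ?thesis .
qed

lemma tsum_Suc: "tsum h (Suc n) = fsum (\<lambda>ts. h (Node ts)) n"
  unfolding tsum_def fsum_def trees_Suc by (simp add: sum.reindex inj_on_def)

lemma tsum_0: "tsum h 0 = 0" by (simp add: tsum_def trees_0)


lemma fsum_nil: "fsum (\<lambda>ts. if ts = [] then c else 0) n = (if n = 0 then c else 0)"
proof -
  have "[] \<in> forests n \<longleftrightarrow> n = 0" by (auto simp: forests_def)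
  thus ?thesis unfolding fsum_def by (simp add: sum.delta[OF finite_forests])
qed

definition fT where "fT h = Abs_fps (tsum h)"
definition fF where "fF g = Abs_fps (fsum g)"

lemma fF_cons: "fF (\<lambda>ts. case ts of [] \<Rightarrow> 0 | t # r \<Rightarrow> a t * b r) = fT a * fF b"
  by (rule fps_ext) (simp add: fF_def fT_def fsum_cons fps_mult_nth)

lemma fT_node: "fT h = fps_X * fF (\<lambda>ts. h (Node ts))"
  by (rule fps_ext) (auto simp: fF_def fT_def tsum_0 tsum_Suc fps_X_mult_nth gr0_conv_Suc)

lemma fF_nil: "fF (\<lambda>ts. if ts = [] then c else 0) = fps_const c"
  by (rule fps_ext) (simp add: fF_def fsum_nil)

lemma fF_add: "fF (\<lambda>ts. g1 ts + g2 ts) = fF g1 + fF g2"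
  by (rule fps_ext) (simp add: fF_def fsum_def sum.distrib)


lemma fT_add: "fT (\<lambda>t. h1 t + h2 t) = fT h1 + fT h2"
  by (rule fps_ext) (simp add: fT_def tsum_def sum.distrib)

lemma fF_split2:
  assumes "\<And>t r. g (t # r) = a1 t * b1 r + a2 t * b2 r"
  shows "fF g = fps_const (g []) + fT a1 * fF b1 + fT a2 * fF b2"
proof -
  have "g = (\<lambda>ts. (if ts = [] then g [] else 0) + ((case ts of [] \<Rightarrow> 0 | t # r \<Rightarrow> a1 t * b1 r)
            + (case ts of [] \<Rightarrow> 0 | t # r \<Rightarrow> a2 t * b2 r)))"
    by (auto simp: fun_eq_iff assms split: list.split)
  hence "fF g = fF (\<lambda>ts. (if ts = [] then g [] else 0) + ((case ts of [] \<Rightarrow> 0 | t # r \<Rightarrow> a1 t * b1 r)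
            + (case ts of [] \<Rightarrow> 0 | t # r \<Rightarrow> a2 t * b2 r)))" by simp
  thus ?thesis by (simp only: fF_add fF_nil fF_cons add.assoc)
qed

declare binomial_Suc_Suc[simp del]

lemma central_binom_rec: "(n+1) * ((2*n+2) choose (n+1)) = 2 * (2*n+1) * ((2*n) choose n)"
proof -
  define a where "a = (2*n+2) choose (n+1)"
  define b where "b = (2*n+1) choose (n+1)"
  define c where "c = (2*n) choose n"
  have h3: "(2*n+1) choose n = b"
    using binomial_symmetric[of n "2*n+1"] by (simp add: b_def)
  have h1: "(n+1) * a = (2*n+2) * b"
    using Suc_times_binomial[of n "2*n+1"] h3 by (simp add: a_def)
  have h2: "(n+1) * b = (2*n+1) * c"
    using Suc_times_binomial[of n "2*n"] by (simp add: b_def c_def)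
  have "(n+1)*((n+1)*a) = (n+1)*((2*n+2)*b)" by (simp only: h1)
  also have "\<dots> = (2*n+2)*((n+1)*b)" by (simp add: algebra_simps)
  also have "\<dots> = (2*n+2)*((2*n+1)*c)" by (simp only: h2)
  also have "\<dots> = (n+1)*(2*(2*n+1)*c)" by (simp add: algebra_simps)
  finally have X: "(n+1)*((n+1)*a) = (n+1)*(2*(2*n+1)*c)" .
  have nz: "(n+1::nat) \<noteq> 0" by simp
  from X have "(n+1)*a = 2*(2*n+1)*c" unfolding mult_left_cancel[OF nz] .
  thus ?thesis by (simp add: a_def c_def)
qed

definition cB :: "real fps" where "cB = Abs_fps (\<lambda>m. real ((2*m) choose m))"

lemma cB_sq: "(1 - fps_const 4 * fps_X) * cB^2 = 1"
proof -
  let ?c = "fps_const (4::real) * fps_X"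
  have d: "(1 - ?c) * fps_deriv cB = 2 * cB"
  proof (rule fps_ext)
    fix n
    have e: "(1 - ?c) * fps_deriv cB = fps_deriv cB - fps_const 4 * (fps_X * fps_deriv cB)"
      by (simp add: algebra_simps)
    define Y where "Y = real ((2*n) choose n)"
    define Z where "Z = real ((2*n+2) choose (n+1))"
    have "real ((n+1) * ((2*n+2) choose (n+1))) = real (2*(2*n+1)*((2*n) choose n))"
      by (simp only: central_binom_rec)
    hence cr': "(real n + 1) * Z = 2*(2*real n+1)*Y"
      unfolding Y_def Z_def of_nat_mult of_nat_add of_nat_1 of_nat_numeral .
    have c2: "fps_nth (2 * cB) n = 2 * real ((2*n) choose n)"
      by (simp add: cB_def numeral_fps_const)
    show "fps_nth ((1 - ?c) * fps_deriv cB) n = fps_nth (2 * cB) n"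
    proof (cases n)
      case 0 thus ?thesis unfolding e by (simp add: cB_def fps_deriv_nth numeral_2_eq_2)
    next
      case (Suc m)
      have "fps_nth (fps_deriv cB - fps_const 4 * (fps_X * fps_deriv cB)) n = (real n + 1) * Z - 4 * (real n * Y)"
        using Suc by (simp add: cB_def fps_deriv_nth Y_def Z_def algebra_simps)
      also have "\<dots> = 2 * Y" using cr' by (simp add: algebra_simps)
      finally show ?thesis unfolding e using c2 by (simp add: Y_def)
    qed
  qed
  have dc: "fps_deriv (1 - ?c) = - fps_const 4" by simp
  have "fps_deriv ((1 - ?c) * cB^2) = fps_deriv (1 - ?c) * cB^2 + (1 - ?c) * fps_deriv (cB^2)"
    by (simp only: fps_deriv_mult add.commute)
  also have "\<dots> = - fps_const 4 * cB^2 + (1 - ?c) * (fps_const 2 * fps_deriv cB * cB)"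
    unfolding dc by (simp add: fps_deriv_power)
  also have "\<dots> = - fps_const 4 * cB^2 + fps_const 2 * cB * ((1 - ?c) * fps_deriv cB)"
    by (simp only: mult_ac)
  also have "\<dots> = - fps_const 4 * cB^2 + fps_const 2 * cB * (2 * cB)" unfolding d ..
  also have "\<dots> = 0" unfolding numeral_fps_const[symmetric] by algebra
  finally have "(1 - ?c) * cB^2 = fps_const (fps_nth ((1 - ?c) * cB^2) 0)"
    using fps_deriv_eq_0_iff by blast
  also have "\<dots> = 1" by (simp add: cB_def power2_eq_square)
  finally show ?thesis .
qed


lemma fT_zero: "fT (\<lambda>_. 0) = 0"
  by (rule fps_ext) (simp add: fT_def tsum_def)

definition "gT = fT (\<lambda>_. 1)"
definition "gF = fF (\<lambda>_. 1)"
definition "gL = fT (\<lambda>t. real (nl t))"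
definition "gLF = fF (\<lambda>ts. real (sum_list (map nl ts)))"
definition "gD = fT (\<lambda>t. real (dp t))"
definition "gDF = fF (\<lambda>ts. real (sum_list (map dp ts)))"

lemma eF: "gF = 1 + gT * gF"
proof -
  have "gF = fps_const 1 + gT * gF + fT (\<lambda>_. 0) * fF (\<lambda>_. 0)"
    unfolding gF_def gT_def by (rule fF_split2) simp
  thus ?thesis by (simp add: fT_zero)
qed

lemma eT: "gT = fps_X * gF"
  unfolding gT_def gF_def by (rule fT_node)

lemma eLF: "gLF = gL * gF + gT * gLF"
proof -
  have "gLF = fps_const 0 + gL * gF + gT * gLF"
    unfolding gLF_def gL_def gF_def gT_def
    using fF_split2[of "\<lambda>ts. real (sum_list (map nl ts))" "\<lambda>t. real (nl t)" "\<lambda>_. 1" "\<lambda>_. 1" "\<lambda>ts. real (sum_list (map nl ts))"]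
    by simp
  thus ?thesis by simp
qed

lemma eL: "gL = fps_X * (1 + gL * gF + gT * gLF)"
proof -
  have "fF (\<lambda>ts. real (nl (Node ts))) = fps_const 1 + gL * gF + gT * gLF"
    unfolding gLF_def gL_def gF_def gT_def
    using fF_split2[of "\<lambda>ts. real (nl (Node ts))" "\<lambda>t. real (nl t)" "\<lambda>_. 1" "\<lambda>_. 1" "\<lambda>ts. real (sum_list (map nl ts))"]
    by simp
  thus ?thesis unfolding gL_def by (subst fT_node) simp
qed

lemma eDF: "gDF = gD * gF + gT * gDF"
proof -
  have "gDF = fps_const 0 + gD * gF + gT * gDF"
    unfolding gDF_def gD_def gF_def gT_def
    using fF_split2[of "\<lambda>ts. real (sum_list (map dp ts))" "\<lambda>t. real (dp t)" "\<lambda>_. 1" "\<lambda>_. 1" "\<lambda>ts. real (sum_list (map dp ts))"]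
    by simp
  thus ?thesis by simp
qed

lemma eD: "gD = fps_X * ((gD + gL) * gF + gT * (gDF + gLF))"
proof -
  have "fF (\<lambda>ts. real (dp (Node ts))) = fps_const 0 + fT (\<lambda>t. real (dp t) + real (nl t)) * gF
      + gT * fF (\<lambda>r. real (sum_list (map dp r)) + real (sum_list (map nl r)))"
    unfolding gF_def gT_def
    using fF_split2[of "\<lambda>ts. real (dp (Node ts))" "\<lambda>t. real (dp t) + real (nl t)" "\<lambda>_. 1" "\<lambda>_. 1" "\<lambda>r. real (sum_list (map dp r)) + real (sum_list (map nl r))"]
    by (simp add: sum_list_addf)
  thus ?thesis unfolding gD_def
    by (subst fT_node) (simp add: fT_add fF_add gD_def[symmetric] gL_def[symmetric] gDF_def[symmetric] gLF_def[symmetric])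
qed

lemma gF0: "fps_nth gF 0 = 1"
proof -
  have "ts = []" if "ts \<in> forests 0" for ts
  proof (cases ts)
    case (Cons t r)
    hence "tsize t = 0" using that by (simp add: forests_def)
    thus ?thesis using tsize_pos[of t] by simp
  qed
  hence "forests 0 = {[]}" by (auto simp: forests_def)
  thus ?thesis by (simp add: gF_def fF_def fsum_def)
qed

lemma a: "gF = 1 + fps_X * gF * gF" using eF eT by simp
lemma b: "(1 - gT) * gF = 1" using eF by (simp add: algebra_simps)

lemma a': "fps_X * gF * gF = gF - 1" by (metis a add_diff_cancel_left')

lemma eLF2: "gLF = gL * gF * gF"
proof -
  have e1: "gLF - gT*gLF = gL*gF" by (subst diff_eq_eq) (rule eLF)
  have "gLF = gLF * ((1 - gT) * gF)" using b by simp
  also have "\<dots> = (gLF - gT*gLF) * gF" by (simp add: algebra_simps)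
  also have "\<dots> = gL*gF*gF" unfolding e1 ..
  finally show ?thesis .
qed

lemma eDF2: "gDF = gD * gF * gF"
proof -
  have e1: "gDF - gT*gDF = gD*gF" by (subst diff_eq_eq) (rule eDF)
  have "gDF = gDF * ((1 - gT) * gF)" using b by simp
  also have "\<dots> = (gDF - gT*gDF) * gF" by (simp add: algebra_simps)
  also have "\<dots> = gD*gF*gF" unfolding e1 ..
  finally show ?thesis .
qed

lemma alg_L: "gL * (2 - gF) = fps_X"
proof -
  have "gL = fps_X * (1 + gL*gF + gT*gLF)" by (rule eL)
  also have "\<dots> = fps_X + fps_X*gL*gF*(1 + fps_X*gF*gF)"
    by (simp add: eT eLF2 algebra_simps)
  also have "\<dots> = fps_X + fps_X*gL*gF*gF" by (simp only: a[symmetric])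
  also have "\<dots> = fps_X + gL*(fps_X*gF*gF)" by (simp add: algebra_simps)
  also have "\<dots> = fps_X + gL*(gF - 1)" by (simp only: a')
  finally have h: "gL = fps_X + gL*(gF - 1)" .
  have "gL*(2-gF) = gL - gL*(gF-1)" by (simp add: algebra_simps)
  also have "\<dots> = fps_X" using h by (metis add_diff_cancel_right')
  finally show ?thesis .
qed

lemma alg_D: "gD * (2 - gF) = (gF - 1) * gL"
proof -
  have "gD = fps_X * ((gD + gL) * gF + gT * (gDF + gLF))" by (rule eD)
  also have "\<dots> = fps_X*(gD+gL)*gF*(1 + fps_X*gF*gF)"
    by (simp add: eT eLF2 eDF2 algebra_simps)
  also have "\<dots> = fps_X*(gD+gL)*gF*gF" by (simp only: a[symmetric])
  also have "\<dots> = (gD+gL)*(fps_X*gF*gF)" by (simp add: algebra_simps)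
  also have "\<dots> = (gD+gL)*(gF - 1)" by (simp only: a')
  finally have h: "gD = (gD+gL)*(gF - 1)" .
  have "gD*(2-gF) = gD - gD*(gF-1)" by (simp add: algebra_simps)
  also have "\<dots> = gL*(gF-1)" using h by (metis add_diff_cancel_left' distrib_right)
  finally show ?thesis by (simp add: mult.commute)
qed


lemma two_minus_F0: "fps_nth (2 - gF) 0 = 1"
  using gF0 by (simp add: numeral_fps_const)

lemma two_minus_F_nz: "2 - gF \<noteq> 0"
proof
  assume "2 - gF = 0"
  hence "fps_nth (2 - gF) 0 = 0" by simp
  with two_minus_F0 show False by simp
qed

lemma X_nz: "(fps_X :: real fps) \<noteq> 0" by simp

lemma key1: "(gF - 1) * (1 - 4*fps_X) = fps_X * (2 - gF)^2"
proof -
  have "fps_X*(2-gF)^2 = 4*fps_X - 4*fps_X*gF + fps_X*gF*gF" by (simp add: algebra_simps power2_eq_square)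
  also have "\<dots> = 4*fps_X - 4*fps_X*gF + (gF - 1)" by (simp only: a')
  also have "\<dots> = (gF - 1) * (1 - 4*fps_X)" by (simp add: algebra_simps)
  finally show ?thesis by simp
qed

lemma key2: "(2 - gF)^2 = gF^2 * (1 - 4*fps_X)"
proof -
  have "fps_X * (2 - gF)^2 = (fps_X*gF*gF) * (1 - 4*fps_X)" unfolding a' key1 ..
  also have "\<dots> = fps_X * (gF^2 * (1 - 4*fps_X))" by (simp add: algebra_simps power2_eq_square)
  finally show ?thesis using X_nz by simp
qed

lemma cB0: "fps_nth cB 0 = 1" by (simp add: cB_def)

lemma cB_sq': "(1 - 4*fps_X) * cB^2 = 1"
  using cB_sq by (simp add: numeral_fps_const)

lemma keyP: "cB * (2 - gF) = gF"
proof -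
  let ?P = "cB * (2 - gF)"
  have "?P^2 = cB^2 * (gF^2 * (1 - 4*fps_X))" by (simp only: power_mult_distrib key2)
  also have "\<dots> = ((1 - 4*fps_X) * cB^2) * gF^2" by (simp add: algebra_simps)
  finally have "?P^2 = ((1 - 4*fps_X) * cB^2) * gF^2" .
  hence sq: "?P^2 = gF^2" by (simp add: cB_sq')
  have "(?P - gF) * (?P + gF) = ?P^2 - gF^2" by (simp add: algebra_simps power2_eq_square)
  hence z: "(?P - gF) * (?P + gF) = 0" using sq by simp
  have n2: "fps_nth (?P + gF) 0 = 2" using cB0 two_minus_F0 gF0 by simp
  have "?P + gF \<noteq> 0"
  proof
    assume "?P + gF = 0"
    hence "fps_nth (?P + gF) 0 = 0" by simp
    with n2 show False by simp
  qed
  with z show ?thesis by simp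
qed

lemma keyL: "2 * gL = fps_X * (1 + cB)"
proof -
  have "(2 * gL) * (2 - gF) = 2 * fps_X" using alg_L by (simp add: algebra_simps)
  also have "\<dots> = (fps_X * (1 + cB)) * (2 - gF)"
  proof -
    have "(fps_X * (1 + cB)) * (2 - gF) = fps_X * (2 - gF) + fps_X * (cB * (2 - gF))"
      by (simp add: algebra_simps)
    also have "\<dots> = 2 * fps_X" unfolding keyP by (simp add: algebra_simps)
    finally show ?thesis by simp
  qed
  finally show ?thesis using two_minus_F_nz by simp
qed

lemma keyD: "(1 - 4*fps_X) * gD = fps_X^2"
proof -
  have "((1 - 4*fps_X) * gD) * (2 - gF)^2 = (1 - 4*fps_X) * (2 - gF) * (gD * (2 - gF))"
    by (simp add: algebra_simps power2_eq_square)
  also have "\<dots> = (2 - gF) * ((gF - 1) * (1 - 4*fps_X)) * gL" unfolding alg_D by (simp add: algebra_simps)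
  also have "\<dots> = fps_X * (2 - gF)^2 * (gL * (2 - gF))" unfolding key1 by (simp add: algebra_simps power2_eq_square)
  also have "\<dots> = fps_X^2 * (2 - gF)^2" unfolding alg_L by (simp add: algebra_simps power2_eq_square)
  finally show ?thesis using two_minus_F_nz by simp
qed

lemma gD_nth: "fps_nth gD n = (if n < 2 then 0 else 4 ^ (n - 2))"
proof (induction n)
  case 0
  have "fps_nth ((1 - 4*fps_X) * gD) 0 = 0" unfolding keyD by simp
  thus ?case by simp
next
  case (Suc n)
  have e: "(1 - 4*fps_X) * gD = gD - fps_const 4 * (fps_X * gD)"
    by (simp add: algebra_simps numeral_fps_const)
  have "fps_nth ((1 - 4*fps_X) * gD) (Suc n) = (if Suc n = 2 then 1 else 0)" unfolding keyD by simp
  hence "fps_nth gD (Suc n) - 4 * fps_nth gD n = (if Suc n = 2 then 1 else 0)" unfolding e by simp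
  hence h: "fps_nth gD (Suc n) = 4 * fps_nth gD n + (if Suc n = 2 then 1 else 0)" by simp
  consider "n = 0" | "n = 1" | "n \<ge> 2" by linarith
  thus ?case
  proof cases
    case 1 thus ?thesis using h Suc.IH by simp
  next
    case 2 thus ?thesis using h Suc.IH by simp
  next
    case 3
    hence "Suc n - 2 = Suc (n - 2)" by simp
    thus ?thesis using h Suc.IH 3 by simp
  qed
qed

lemma gL_nth: "2 * fps_nth gL n = (if n = 0 then 0 else (if n = 1 then 1 else 0) + real ((2*(n-1)) choose (n-1)))"
proof -
  have "fps_nth (2 * gL) n = fps_nth (fps_X * (1 + cB)) n" unfolding keyL ..
  thus ?thesis by (simp add: cB_def numeral_fps_const)
qed

lemma total_leaves_real: "real (total_leaves n) = fps_nth gL n"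
  by (simp add: total_leaves_def gL_def fT_def tsum_def leaves_props)

lemma total_depth_real: "real (total_leaf_depth n) = fps_nth gD n"
  by (simp add: total_leaf_depth_def gD_def fT_def tsum_def leaves_props)

lemma total_leaves_eq: "n \<ge> 2 \<Longrightarrow> real (total_leaves n) = real ((2*n - 2) choose (n - 1)) / 2"
  using gL_nth[of n] total_leaves_real[of n] by (simp add: right_diff_distrib')

lemma total_depth_eq: "n \<ge> 2 \<Longrightarrow> total_leaf_depth n = 4 ^ (n - 2)"
proof -
  assume "n \<ge> 2"
  hence "real (total_leaf_depth n) = real (4 ^ (n-2))" using total_depth_real gD_nth by simp
  thus ?thesis by (simp only: of_nat_eq_iff)
qed


lemma dfact_even_Suc: "dfact (2*(Suc m)) = (2*m+2) * dfact (2*m)"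
proof -
  have "2*Suc m = Suc (Suc (2*m))" by simp
  thus ?thesis by simp
qed

lemma dfact_odd_Suc: "dfact (2*(Suc m) - 1) = (2*m+1) * dfact (2*m - 1)"
proof (cases m)
  case 0 thus ?thesis by simp
next
  case (Suc k)
  define x where "x = 2*m - 1"
  have e1: "2*Suc m - 1 = Suc (Suc x)" using Suc by (simp add: x_def)
  have e2: "Suc (Suc x) = 2*m+1" using Suc by (simp add: x_def)
  have "dfact (2*Suc m - 1) = dfact (Suc (Suc x))" using e1 by simp
  also have "\<dots> = Suc (Suc x) * dfact x" by simp
  also have "\<dots> = (2*m+1) * dfact x" by (simp only: e2)
  also have "\<dots> = (2*m+1) * dfact (2*m - 1)" by (simp add: x_def)
  finally show ?thesis .
qed

lemma dfact_pos: "dfact n > 0"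
  by (induction n rule: dfact.induct) auto

lemma dfact_binom: "dfact (2*m) * ((2*m) choose m) = 4^m * dfact (2*m - 1)"
proof (induction m)
  case 0 thus ?case by simp
next
  case (Suc m)
  have cb: "(m+1) * ((2*m+2) choose (m+1)) = 2*(2*m+1)*((2*m) choose m)" by (rule central_binom_rec)
  have "dfact (2*Suc m) * ((2*Suc m) choose Suc m) = 2 * dfact (2*m) * ((m+1) * ((2*m+2) choose (m+1)))"
    unfolding dfact_even_Suc by (simp add: algebra_simps)
  also have "\<dots> = 4 * (2*m+1) * (dfact (2*m) * ((2*m) choose m))" unfolding cb by (simp add: algebra_simps)
  also have "\<dots> = 4^(Suc m) * dfact (2*Suc m - 1)" unfolding Suc.IH dfact_odd_Suc by (simp add: algebra_simps)
  finally show ?case .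
qed

definition rr :: "nat \<Rightarrow> real" where "rr m = real (dfact (2*m)) / real (dfact (2*m - 1))"

lemma rr_pos: "rr m > 0" using dfact_pos by (simp add: rr_def)

lemma rr_Suc: "rr (Suc m) = rr m * (2*m+2) / (2*m+1)"
  unfolding rr_def dfact_even_Suc dfact_odd_Suc using dfact_pos[of "2*m-1"]
  by (simp add: field_simps)

definition W :: "nat \<Rightarrow> real" where "W m = (\<Prod>k=1..m. (4*real k^2) / (4*real k^2 - 1))"

lemma W_eq: "W m = rr m ^ 2 / (2*m+1)"
proof (induction m)
  case 0 thus ?case by (simp add: W_def rr_def)
next
  case (Suc m)
  have "W (Suc m) = W m * ((4*real (Suc m)^2) / (4*real (Suc m)^2 - 1))"
    by (simp add: W_def prod.cl_ivl_Suc)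
  also have "\<dots> = rr m ^ 2 / (2*m+1) * ((4*(real m+1)^2) / ((2*m+1)*(2*m+3)))"
    unfolding Suc.IH by (simp add: algebra_simps power2_eq_square)
  also have "\<dots> = rr (Suc m) ^ 2 / (2 * real (Suc m) + 1)"
    unfolding rr_Suc by (simp add: field_simps power2_eq_square)
  finally show ?case by simp
qed

lemma W_lim: "W \<longlonglongrightarrow> pi/2"
  unfolding W_def using wallis by simp

lemma W_inc: "incseq W"
proof (rule incseq_SucI)
  fix m
  have "real (Suc m)^2 \<ge> 1" by (rule one_le_power) simp
  hence pos: "4*real (Suc m)^2 - 1 > 0" by linarith
  have f: "(4*real (Suc m)^2) / (4*real (Suc m)^2 - 1) \<ge> 1"
    using pos by (simp add: le_divide_eq)
  have "W m \<ge> 0" unfolding W_eq using rr_pos by simp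
  hence "W m \<le> W m * ((4*real (Suc m)^2) / (4*real (Suc m)^2 - 1))"
    using f by (metis mult_le_cancel_left1 mult.commute order_le_less not_le mult_cancel_left1 mult_right_mono mult_1_right)
  thus "W m \<le> W (Suc m)" by (simp add: W_def prod.cl_ivl_Suc)
qed

lemma rr_upper: "rr m ^ 2 \<le> pi * (2*m+1) / 2"
proof -
  have "W m \<le> pi/2" by (rule incseq_le[OF W_inc W_lim])
  thus ?thesis unfolding W_eq by (simp add: field_simps)
qed

definition S :: "nat \<Rightarrow> real" where "S k = rr k ^ 2 / k"

lemma L1: fixes c::real assumes "c > 0" shows "(2*c+2)^2 / ((2*c+1)^2 * (c+1)) \<le> 1/c"
proof -
  have "(2*c+2)^2 * c \<le> (2*c+1)^2*(c+1)" using assms by (simp add: power2_eq_square algebra_simps)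
  moreover have "(2*c+1)^2 * (c+1) > 0" using assms by (simp add: add_pos_pos)
  ultimately show ?thesis using assms by (simp add: divide_simps mult.commute)
qed

lemma L2: fixes a c::real assumes "c > 0" shows "a/(2*c+1) * ((2*c+1)/c) = a / c"
proof -
  have "2*c+1 \<noteq> 0" using assms by linarith
  thus ?thesis by simp
qed

lemma L3: fixes a c::real shows "(a*(2*c+2)/(2*c+1))^2/(c+1) = a^2 * ((2*c+2)^2 / ((2*c+1)^2 * (c+1)))"
  by (simp add: power_mult_distrib power_divide)

lemma L4: fixes a :: real and k :: nat assumes "k > 0" shows "a / real (2*k+1) * (2 + 1 / real k) = a / real k"
proof -
  have kp: "real k > 0" using assms by simp
  have "2 + 1 / real k = real (2*k+1) / real k" using kp by (simp add: field_simps)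
  moreover have "real (2*k+1) \<noteq> 0" by simp
  ultimately show ?thesis by simp
qed

lemma S_dec: "k \<ge> 1 \<Longrightarrow> S (Suc k) \<le> S k"
proof -
  assume k: "k \<ge> 1"
  hence kp: "real k > 0" by simp
  have "S (Suc k) = rr k ^ 2 * ((2*real k+2)^2 / ((2*real k+1)^2 * (real k+1)))"
    unfolding S_def rr_Suc using L3[of "rr k" "real k"] by (simp add: add.commute)
  also have "\<dots> \<le> rr k ^ 2 * (1 / real k)"
    by (rule mult_left_mono[OF L1[OF kp]]) simp
  also have "\<dots> = S k" by (simp add: S_def)
  finally show ?thesis .
qed

lemma S_lim: "S \<longlonglongrightarrow> pi"
proof -
  have "(\<lambda>k. W k * (2 + 1 / real k)) \<longlonglongrightarrow> pi/2 * (2 + 0)"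
    by (intro tendsto_intros W_lim)
  moreover have "eventually (\<lambda>k. W k * (2 + 1 / real k) = S k) sequentially"
    using eventually_gt_at_top[of 0]
  proof eventually_elim
    case (elim k)
    hence kp: "real k > 0" by simp
    hence nz2: "2*real k + 1 \<noteq> 0" by linarith
    have tk: "2 + 1 / real k = (2*real k+1) / real k" using kp by (simp add: field_simps)
    have "W k * (2 + 1 / real k) = S k"
    proof -
      have nz: "1 + 2 * real k \<noteq> 0" using kp by linarith
      show ?thesis unfolding W_eq S_def using L4[OF elim] .
    qed
    thus ?case .
  qed
  ultimately show ?thesis using tendsto_cong by (fastforce)
qed

lemma rr_lower: "m \<ge> 1 \<Longrightarrow> pi * m \<le> rr m ^ 2"
proof -
  assume m: "m \<ge> 1"
  have "\<forall>k\<ge>m. S k \<le> S m"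
  proof (intro allI impI)
    fix k assume "m \<le> k"
    thus "S k \<le> S m"
    proof (induction k rule: dec_induct)
      case base thus ?case by simp
    next
      case (step j)
      thus ?case using S_dec[of j] m by linarith
    qed
  qed
  hence "pi \<le> S m" using LIMSEQ_le_const2[OF S_lim] by blast
  thus ?thesis using m by (simp add: S_def field_simps)
qed


lemma expected_eq: "n \<ge> 2 \<Longrightarrow> expected_leaf_depth n = real (dfact (2*n - 2)) / (2 * real (dfact (2*n - 3)))"
proof -
  assume n: "n \<ge> 2"
  define m where "m = n - 1"
  have m2: "2*m = 2*n - 2" "2*m - 1 = 2*n - 3" "m = Suc (n-2)" using n by (auto simp: m_def)
  have "dfact (2*m) * ((2*m) choose m) = 4^m * dfact (2*m - 1)" by (rule dfact_binom)
  hence "dfact (2*n-2) * ((2*n-2) choose (n-1)) = 4^(n-1) * dfact (2*n-3)"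
    unfolding m2(2) unfolding m2(1) unfolding m_def .
  moreover have "(4::nat)^(n-1) = 4 * 4^(n-2)" by (metis m2(3) m_def power_Suc)
  ultimately have db: "dfact (2*n-2) * ((2*n-2) choose (n-1)) = 4 * 4^(n-2) * dfact (2*n-3)" by simp
  hence dbr: "real (dfact (2*n-2)) * real ((2*n-2) choose (n-1)) = 4 * 4^(n-2) * real (dfact (2*n-3))"
    by (metis (mono_tags) of_nat_mult of_nat_numeral of_nat_power)
  have Cpos: "real ((2*n-2) choose (n-1)) > 0" using n by simp
  have dpos: "real (dfact (2*n-3)) > 0" using dfact_pos by simp
  have "expected_leaf_depth n = real (4^(n-2)::nat) / (real ((2*n - 2) choose (n - 1)) / 2)"
    unfolding expected_leaf_depth_def total_leaves_eq[OF n] total_depth_eq[OF n] by simp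
  also have "\<dots> = real (dfact (2*n - 2)) / (2 * real (dfact (2*n - 3)))"
    using Cpos dpos dbr by (simp add: field_simps)
  finally show ?thesis .
qed

lemma expected_rr: "n \<ge> 2 \<Longrightarrow> expected_leaf_depth n = rr (n-1) / 2"
proof -
  assume n: "n \<ge> 2"
  have "2*(n-1) = 2*n-2" "2*(n-1) - 1 = 2*n-3" using n by auto
  thus ?thesis unfolding expected_eq[OF n] rr_def by simp
qed

lemma sqrt_bound:
  fixes r :: real and n :: nat
  assumes n: "n \<ge> 1" and r0: "r \<ge> 0" and lo: "pi * (real n - 1) \<le> r^2" and hi: "r^2 \<le> pi * real n"
  shows "\<bar>r/2 - sqrt (pi * real n)/2\<bar> \<le> 1 / sqrt (real n)"
proof -
  define q where "q = sqrt pi"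
  define t where "t = sqrt (real n)"
  define s where "s = q * t"
  have qp: "q > 0" unfolding q_def by simp
  have tp: "t > 0" unfolding t_def using n by simp
  have ss: "sqrt (pi * real n) = s" unfolding s_def q_def t_def by (simp add: real_sqrt_mult)
  have s2: "s^2 = pi * real n" unfolding s_def q_def t_def by (simp add: power_mult_distrib)
  have q2: "q^2 = pi" unfolding q_def by simp
  have sp: "s > 0" unfolding s_def using qp tp by simp
  have rs: "r \<le> s" using hi s2 sp r0 by (metis power2_le_imp_le less_imp_le)
  have "(s - r) * (s + r) = s^2 - r^2" by (simp add: algebra_simps power2_eq_square)
  also have "\<dots> \<le> pi" using lo s2 by (simp add: algebra_simps)
  finally have A: "(s - r) * (s + r) \<le> pi" .
  have "(s - r) * s \<le> (s - r) * (s + r)" using rs r0 by (intro mult_left_mono) auto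
  with A have "q * ((s - r) * t) \<le> q * q" unfolding s_def using q2 by (simp add: algebra_simps power2_eq_square)
  hence B: "(s - r) * t \<le> q" using qp by simp
  have "q \<le> 2" unfolding q_def using pi_less_4 by (metis less_imp_le real_sqrt_four real_sqrt_le_mono)
  with B have "(s - r) * t \<le> 2" by simp
  hence "(s - r) / 2 \<le> 1 / t" using tp by (simp add: field_simps)
  thus ?thesis unfolding ss using rs t_def by simp
qed

theorem mainTheorem7:
  shows "(\<forall>n\<ge>2. total_leaf_depth n = 4 ^ (n - 2))
       \<and> (\<forall>n\<ge>2. real (total_leaves n) = real ((2*n - 2) choose (n - 1)) / 2)
       \<and> (\<forall>n\<ge>2. expected_leaf_depth n = real (dfact (2*n - 2)) / (2 * real (dfact (2*n - 3))))
       \<and> (\<lambda>n. expected_leaf_depth n - sqrt (pi * real n) / 2) \<in> O(\<lambda>n. 1 / sqrt (real n))"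
proof (intro conjI allI impI)
  show "\<And>n. n \<ge> 2 \<Longrightarrow> total_leaf_depth n = 4 ^ (n - 2)" by (rule total_depth_eq)
  show "\<And>n. n \<ge> 2 \<Longrightarrow> real (total_leaves n) = real ((2*n - 2) choose (n - 1)) / 2" by (rule total_leaves_eq)
  show "\<And>n. n \<ge> 2 \<Longrightarrow> expected_leaf_depth n = real (dfact (2*n - 2)) / (2 * real (dfact (2*n - 3)))"
    by (rule expected_eq)
  show "(\<lambda>n. expected_leaf_depth n - sqrt (pi * real n) / 2) \<in> O(\<lambda>n. 1 / sqrt (real n))"
  proof (rule bigoI[where c = 1])
    show "eventually (\<lambda>n. norm (expected_leaf_depth n - sqrt (pi * real n) / 2) \<le> 1 * norm (1 / sqrt (real n))) at_top"
      unfolding eventually_at_top_linorder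
    proof (intro exI allI impI)
      fix n :: nat assume n: "n \<ge> 2"
      define m where "m = n - 1"
      have m1: "m \<ge> 1" and rm: "real m = real n - 1" using n by (auto simp: m_def)
      have lo: "pi * (real n - 1) \<le> rr m ^ 2" using rr_lower[OF m1] rm by simp
      have "rr m ^ 2 \<le> pi * (2 * real m + 1) / 2" using rr_upper[of m] by (simp add: algebra_simps)
      also have "\<dots> \<le> pi * (2 * real n) / 2" using rm by (intro divide_right_mono mult_left_mono) auto
      also have "\<dots> = pi * real n" by simp
      finally have hi: "rr m ^ 2 \<le> pi * real n" .
      have "\<bar>rr m/2 - sqrt (pi * real n)/2\<bar> \<le> 1 / sqrt (real n)"
        using sqrt_bound[of n "rr m"] n lo hi rr_pos[of m] by simp
      thus "norm (expected_leaf_depth n - sqrt (pi * real n) / 2) \<le> 1 * norm (1 / sqrt (real n))"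
        using expected_rr[OF n] by (simp add: m_def)
    qed
  qed
qed

end
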